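(* Let $t\geq 1$ and let $C=\{a_1,\ldots,a_m\}$ be a fan grounded by a curve $\gamma=\gamma_1\cup\cdots\cup\gamma_m$. If each $a_i$ intersects $\gamma$ in at most $t$ points, then there is a subfan $C'=\{a_{i_1},\ldots,a_{i_r}\}\subseteq C$ with $i_1<\cdots<i_r$ and $r=\lfloor\log_{t+1}m\rfloor$ that is grounded by a subcurve $\gamma'=\gamma'_1\cup\cdots\cup\gamma'_r\subseteq\gamma$ such that (1) $\gamma'_j\supseteq\gamma_{i_j}$ for $1\leq j\leq r$, and (2) $a_{i_j}$ intersects $\gamma'$ only within $\gamma'_1\cup\cdots\cup\gamma'_j$ for $1\leq j\leq r$.
   Context: All curves are simple; no two curves are tangent (a shared interior point is a proper crossing). A fan with apex $v$ is a collection of curves with common endpoint $v$. Let $\gamma$ be a curve with endpoints $p,q$, partitioned into subcurves $\gamma_1,\ldots,\gamma_m$ appearing in this order along $\gamma$ from $p$ to $q$ (consecutive pieces sharing an endpoint). A fan $C=\{a_1,\ldots,a_m\}$ with apex $v$ is grounded by $\gamma_1\cup\cdots\cup\gamma_m$ if $v\notin\gamma$ and each $a_i$ has its other endpoint on $\gamma_i$. It is well-grounded by $\gamma_1\cup\cdots\cup\gamma_m$ if in addition each $a_i$ intersects $\gamma$ only within $\gamma_i$. *)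

theory Defs
  imports "HOL-Analysis.Analysis"
begin

text \<open>Curves in the plane are arcs (continuous injective maps on [0,1]) into the complex
plane. A subcurve of an arc g is the image of a parameter subinterval.\<close>

definition subarc :: "(real \<Rightarrow> complex) \<Rightarrow> real \<Rightarrow> real \<Rightarrow> complex set" where
  "subarc g x y = g ` {x..y}"

end

theory Submission
  imports Defs
begin

definition good :: "(real \<Rightarrow> complex) \<Rightarrow> (nat \<Rightarrow> real) \<Rightarrow> (nat \<Rightarrow> real \<Rightarrow> complex) \<Rightarrow> nat \<Rightarrow> nat set \<Rightarrow> (nat \<Rightarrow> nat) \<Rightarrow> (nat \<Rightarrow> real) \<Rightarrow> bool" where
 "good g s a n I idx u \<longleftrightarrow> (\<forall>j. 1 \<le> j \<and> j < n \<longrightarrow> idx j < idx (Suc j)) \<and> (\<forall>j\<in>{1..n}. idx j \<in> I)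
   \<and> (\<forall>j<n. u j < u (Suc j)) \<and> s (Min I - 1) \<le> u 0 \<and> u n \<le> s (Max I)
   \<and> (\<forall>j\<in>{1..n}. u (j-1) \<le> s (idx j - 1) \<and> s (idx j) \<le> u j
        \<and> path_image (a (idx j)) \<inter> subarc g (u 0) (u n) \<subseteq> subarc g (u 0) (u j))"

lemma succ_lt:
  fixes f :: "nat \<Rightarrow> 'b::order"
  assumes "\<forall>j. lo \<le> j \<and> j < n \<longrightarrow> f j < f (Suc j)" "lo \<le> i" "i < j" "j \<le> n"
  shows "f i < f j"
  using assms(3,4)
proof (induction j)
  case 0 then show ?case by simp
next
  case (Suc j)
  have "f j < f (Suc j)" using assms(1,2) Suc.prems by auto
  show ?case
  proof (cases "i < j")
    case True
    then have "f i < f j" using Suc.IH Suc.prems by simp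
    then show ?thesis using \<open>f j < f (Suc j)\<close> by (rule less_trans)
  next
    case False
    then have "i = j" using Suc.prems by simp
    then show ?thesis using \<open>f j < f (Suc j)\<close> by simp
  qed
qed

lemma succ_le:
  fixes f :: "nat \<Rightarrow> 'b::order"
  assumes "\<forall>j. lo \<le> j \<and> j < n \<longrightarrow> f j < f (Suc j)" "lo \<le> i" "i \<le> j" "j \<le> n"
  shows "f i \<le> f j"
  using succ_lt[OF assms(1,2), of j] assms by (cases "i = j") auto

lemma smono_lt:
  fixes s :: "nat \<Rightarrow> real"
  assumes "strict_mono_on {0..m} s" "i < j" "j \<le> m" shows "s i < s j"
proof -
  have "i \<in> {0..m}" "j \<in> {0..m}" using assms by auto
  then show ?thesis using assms unfolding strict_mono_on_def by blast
qed

lemma smono_le: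
  fixes s :: "nat \<Rightarrow> real"
  assumes "strict_mono_on {0..m} s" "i \<le> j" "j \<le> m" shows "s i \<le> s j"
proof (cases "i = j")
  case False
  then have "i < j" using assms by simp
  then show ?thesis using smono_lt[OF assms(1) _ assms(3)] by (simp add: less_imp_le)
qed simp

lemma subarc_mono: "x' \<le> x \<Longrightarrow> y \<le> y' \<Longrightarrow> subarc g x y \<subseteq> subarc g x' y'"
  unfolding subarc_def by auto

lemma subarc_union:
  assumes "\<forall>j<n. u j < (u (Suc j)::real)" "1 \<le> j" "j \<le> n"
  shows "subarc g (u 0) (u j) \<subseteq> (\<Union>k \<in> {1..j}. subarc g (u (k - 1)) (u k))"
  using assms(2,3)
proof (induction j)
  case 0 then show ?case by simp
next
  case (Suc j)
  show ?case
  proof (cases "j = 0")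
    case True then show ?thesis by auto
  next
    case False
    have IH: "subarc g (u 0) (u j) \<subseteq> (\<Union>k \<in> {1..j}. subarc g (u (k - 1)) (u k))"
      using Suc False by auto
    have "subarc g (u 0) (u (Suc j)) \<subseteq> subarc g (u 0) (u j) \<union> subarc g (u j) (u (Suc j))"
    proof
      fix x assume "x \<in> subarc g (u 0) (u (Suc j))"
      then obtain y where y: "x = g y" "u 0 \<le> y" "y \<le> u (Suc j)" unfolding subarc_def by auto
      show "x \<in> subarc g (u 0) (u j) \<union> subarc g (u j) (u (Suc j))"
      proof (cases "y \<le> u j")
        case True then show ?thesis using y unfolding subarc_def by auto
      next
        case False then show ?thesis using y unfolding subarc_def by auto
      qed
    qed
    also have "\<dots> \<subseteq> (\<Union>k \<in> {1..Suc j}. subarc g (u (k - 1)) (u k))"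
    proof
      fix x assume "x \<in> subarc g (u 0) (u j) \<union> subarc g (u j) (u (Suc j))"
      then show "x \<in> (\<Union>k \<in> {1..Suc j}. subarc g (u (k - 1)) (u k))"
      proof
        assume "x \<in> subarc g (u 0) (u j)"
        then obtain k where "k \<in> {1..j}" "x \<in> subarc g (u (k - 1)) (u k)" using IH by blast
        then show ?thesis by (intro UN_I[of k]) auto
      next
        assume "x \<in> subarc g (u j) (u (Suc j))"
        then show ?thesis by (intro UN_I[of "Suc j"]) auto
      qed
    qed
    finally show ?thesis .
  qed
qed

lemma pow_le:
  fixes m t :: nat assumes "t \<ge> 1" "m \<ge> 1"
  shows "(t+1) ^ (nat \<lfloor>log (real t + 1) (real m)\<rfloor>) \<le> m"
proof -
  define b where "b = real t + 1"
  define r where "r = nat \<lfloor>log b (real m)\<rfloor>"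
  have b: "b > 1" using assms unfolding b_def by simp
  have m0: "real m > 0" using assms by simp
  have lg: "log b (real m) \<ge> 0" using b m0 assms by (subst zero_le_log_cancel_iff) auto
  have r: "real r \<le> log b (real m)" unfolding r_def using lg by linarith
  have "real ((t+1) ^ r) = b ^ r" unfolding b_def by (simp add: algebra_simps)
  also have "\<dots> = b powr real r" using b by (simp add: powr_realpow)
  also have "\<dots> \<le> b powr log b (real m)"
    using b r by (intro powr_mono) auto
  also have "\<dots> = real m" using b m0 by (intro powr_log_cancel) auto
  finally have "real ((t+1) ^ r) \<le> real m" .
  then show ?thesis unfolding r_def b_def by linarith
qed


lemma main_ind:
  fixes g :: "real \<Rightarrow> complex" and s :: "nat \<Rightarrow> real" and m t :: nat
    and a :: "nat \<Rightarrow> real \<Rightarrow> complex"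
  assumes t1: "t \<ge> 1" and ag: "arc g" and sm: "strict_mono_on {0..m} s"
    and s0: "s 0 = 0" and s1: "s m = 1"
    and fin: "\<And>i. i \<in> {1..m} \<Longrightarrow> pathfinish (a i) \<in> subarc g (s (i - 1)) (s i)"
    and cnt: "\<And>i. i \<in> {1..m} \<Longrightarrow>
           finite (path_image (a i) \<inter> path_image g) \<and> card (path_image (a i) \<inter> path_image g) \<le> t"
  shows "I \<subseteq> {1..m} \<Longrightarrow> (t+1)^n \<le> card I \<Longrightarrow> \<exists>idx u. good g s a n I idx u"
proof (induction n arbitrary: I)
  case 0
  then have fI: "finite I" "I \<noteq> {}" by (auto intro: card_ge_0_finite)
  then have "Min I \<in> I" "Max I \<in> I" "Min I \<le> Max I" by auto
  then have "Min I - 1 \<le> Max I" "Max I \<le> m" using 0 by auto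
  then have "s (Min I - 1) \<le> s (Max I)" using smono_le[OF sm] by blast
  then have "good g s a 0 I (\<lambda>_. 0) (\<lambda>_. s (Min I - 1))" unfolding good_def by simp
  then show ?case by blast
next
  case (Suc n)
  have cI: "card I \<ge> 1" using Suc.prems(2) by (metis le_trans one_le_power le_add2 add.commute)
  then have fI: "finite I" "I \<noteq> {}" by (auto intro: card_ge_0_finite)
  define i1 where "i1 = Min I"
  have i1I: "i1 \<in> I" using fI unfolding i1_def by simp
  have i1m: "1 \<le> i1" "i1 \<le> m" using i1I Suc.prems(1) by auto
  define I' where "I' = I - {i1}"
  have I'gt: "\<And>i. i \<in> I' \<Longrightarrow> i1 < i"
    using fI unfolding I'_def i1_def by (metis DiffE Min_le insertI1 le_neq_implies_less)
  have I'm: "I' \<subseteq> {1..m}" using Suc.prems(1) unfolding I'_def by auto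
  have finI': "finite I'" using fI unfolding I'_def by simp
  have cardI': "card I' = card I - 1" unfolding I'_def using i1I fI by (simp add: card_Diff_singleton)
  have sr: "\<And>i. i \<le> m \<Longrightarrow> 0 \<le> s i \<and> s i \<le> 1"
    using smono_le[OF sm] s0 s1 by (metis le0 order.refl)
  define P where "P = {\<tau>\<in>{0..1}. s i1 < \<tau> \<and> g \<tau> \<in> path_image (a i1)}"
  have inj: "inj_on g {0..1}" using ag unfolding arc_def by simp
  have Psub: "g ` P \<subseteq> path_image (a i1) \<inter> path_image g"
    unfolding P_def path_image_def by auto
  have injP: "inj_on g P" using inj unfolding P_def by (rule inj_on_subset) auto
  have cnt1: "finite (path_image (a i1) \<inter> path_image g)" "card (path_image (a i1) \<inter> path_image g) \<le> t"
    using cnt[of i1] i1m by auto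
  have finP: "finite P"
    using finite_imageD[OF finite_subset[OF Psub cnt1(1)] injP] .
  have cardP: "card P + 1 \<le> t"
  proof -
    obtain \<tau>0 where t0: "pathfinish (a i1) = g \<tau>0" "s (i1 - 1) \<le> \<tau>0" "\<tau>0 \<le> s i1"
      using fin[of i1] i1m unfolding subarc_def by auto
    have "0 \<le> s (i1 - 1)" "s i1 \<le> 1" using sr i1m by auto
    then have t01: "\<tau>0 \<in> {0..1}" using t0 by auto
    have nP: "pathfinish (a i1) \<notin> g ` P"
    proof
      assume "pathfinish (a i1) \<in> g ` P"
      then obtain p where p: "p \<in> P" "g \<tau>0 = g p" using t0 by auto
      then have "p \<in> {0..1}" "s i1 < p" unfolding P_def by auto
      then have "\<tau>0 = p" using inj t01 p(2) unfolding inj_on_def by blast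
      then show False using t0(3) \<open>s i1 < p\<close> by simp
    qed
    have "insert (pathfinish (a i1)) (g ` P) \<subseteq> path_image (a i1) \<inter> path_image g"
    proof -
      have "pathfinish (a i1) \<in> path_image g"
        using t0 t01 unfolding path_image_def by auto
      then show ?thesis using Psub pathfinish_in_path_image by auto
    qed
    then have "card (insert (pathfinish (a i1)) (g ` P)) \<le> t"
      using card_mono[OF cnt1(1)] cnt1(2) by (meson le_trans)
    moreover have "card (insert (pathfinish (a i1)) (g ` P)) = card P + 1"
      using nP finP card_image[OF injP] by simp
    ultimately show ?thesis by simp
  qed
  define kf where "kf i = card {p\<in>P. p \<le> s (i-1)}" for i
  define Alive where "Alive = {i\<in>I'. \<not>(\<exists>p\<in>P. s(i-1) < p \<and> p \<le> s i)}"
  define C where "C k = {i\<in>Alive. kf i = k}" for k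
  have finA: "finite Alive" using finI' unfolding Alive_def by simp
  have dead: "card (I' - Alive) \<le> card P"
  proof -
    have "I' - Alive \<subseteq> (\<Union>p\<in>P. {i\<in>I'. s(i-1) < p \<and> p \<le> s i})"
      unfolding Alive_def by auto
    then have "card (I' - Alive) \<le> card (\<Union>p\<in>P. {i\<in>I'. s(i-1) < p \<and> p \<le> s i})"
      by (intro card_mono) (use finP finI' in auto)
    also have "\<dots> \<le> (\<Sum>p\<in>P. card {i\<in>I'. s(i-1) < p \<and> p \<le> s i})"
      using finP by (rule card_UN_le)
    also have "\<dots> \<le> (\<Sum>p\<in>P. 1)"
    proof (rule sum_mono)
      fix p assume "p \<in> P"
      have "\<forall>i\<in>{i\<in>I'. s(i-1) < p \<and> p \<le> s i}. \<forall>i'\<in>{i\<in>I'. s(i-1) < p \<and> p \<le> s i}. i = i'"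
      proof (intro ballI)
        fix i i' assume A: "i \<in> {i\<in>I'. s(i-1) < p \<and> p \<le> s i}" "i' \<in> {i\<in>I'. s(i-1) < p \<and> p \<le> s i}"
        have im: "i \<le> m" "i' \<le> m" "1 \<le> i" "1 \<le> i'" using A I'm by auto
        show "i = i'"
        proof (rule ccontr)
          assume "i \<noteq> i'"
          then consider "i < i'" | "i' < i" by linarith
          then show False
          proof cases
            case 1
            then have "s i \<le> s (i' - 1)" using smono_le[OF sm, of i "i'-1"] im by simp
            then show False using A by auto
          next
            case 2
            then have "s i' \<le> s (i - 1)" using smono_le[OF sm, of i' "i-1"] im by simp
            then show False using A by auto
          qed
        qed
      qed
      then show "card {i\<in>I'. s(i-1) < p \<and> p \<le> s i} \<le> 1"
        using card_le_Suc0_iff_eq[of "{i\<in>I'. s(i-1) < p \<and> p \<le> s i}"] finI' by simp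
    qed
    also have "\<dots> = card P" by simp
    finally show ?thesis .
  qed
  have alive: "card I' \<le> card Alive + card P"
  proof -
    have "I' = Alive \<union> (I' - Alive)" unfolding Alive_def by auto
    then have "card I' \<le> card Alive + card (I' - Alive)" by (metis card_Un_le)
    then show ?thesis using dead by simp
  qed
  have "\<exists>k\<in>{0..card P}. (t+1)^n \<le> card (C k)"
  proof (rule ccontr)
    assume "\<not> ?thesis"
    then have small: "\<And>k. k \<in> {0..card P} \<Longrightarrow> card (C k) \<le> (t+1)^n - 1" by force
    have "Alive \<subseteq> (\<Union>k\<in>{0..card P}. C k)"
    proof
      fix i assume "i \<in> Alive"
      have "kf i \<le> card P" unfolding kf_def using finP by (intro card_mono) auto
      then show "i \<in> (\<Union>k\<in>{0..card P}. C k)" using \<open>i \<in> Alive\<close> unfolding C_def by auto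
    qed
    then have "card Alive \<le> card (\<Union>k\<in>{0..card P}. C k)"
      by (intro card_mono) (use finA in \<open>auto simp: C_def\<close>)
    also have "\<dots> \<le> (\<Sum>k\<in>{0..card P}. card (C k))" by (rule card_UN_le) simp
    also have "\<dots> \<le> (\<Sum>k\<in>{0..card P}. (t+1)^n - 1)" by (rule sum_mono) (rule small)
    also have "\<dots> = (card P + 1) * ((t+1)^n - 1)" by simp
    also have "\<dots> \<le> t * ((t+1)^n - 1)" using cardP by (intro mult_right_mono) auto
    finally have A1: "card Alive \<le> t * ((t+1)^n - 1)" .
    define X where "X = (t+1)^n"
    define Y where "Y = t * X"
    have X1: "X \<ge> 1" unfolding X_def by simp
    have Yt: "Y \<ge> t" unfolding Y_def using X1 by simp
    have e1: "(t+1)^Suc n = Y + X" unfolding X_def Y_def by (simp add: algebra_simps)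
    have e2: "t * ((t+1)^n - 1) = Y - t" unfolding X_def Y_def by (simp add: right_diff_distrib')
    have "(t+1)^Suc n \<le> card I" using Suc.prems(2) .
    then show False using A1 alive cardI' cardP e1 e2 X1 Yt by linarith
  qed
  then obtain k0 where k0: "(t+1)^n \<le> card (C k0)" by blast
  define J where "J = C k0"
  have JA: "J \<subseteq> Alive" unfolding J_def C_def by auto
  have JI': "J \<subseteq> I'" using JA unfolding Alive_def by auto
  have Jm: "J \<subseteq> {1..m}" using JI' I'm by auto
  obtain idx' u' where G: "good g s a n J idx' u'" using Suc.IH[OF Jm] k0 unfolding J_def by blast
  have cJ: "card J \<ge> 1" using k0 unfolding J_def by (metis le_trans one_le_power le_add2 add.commute)
  then have fJ: "finite J" "J \<noteq> {}" by (auto intro: card_ge_0_finite)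
  define mJ where "mJ = Min J"
  define MJ where "MJ = Max J"
  have mJJ: "mJ \<in> J" and MJJ: "MJ \<in> J" and mM: "mJ \<le> MJ" using fJ unfolding mJ_def MJ_def by auto
  have i1mJ: "i1 < mJ" using I'gt mJJ JI' by auto
  have MJI: "MJ \<le> Max I" unfolding MJ_def using fI fJ JI' unfolding I'_def by (intro Max_mono) auto
  have MJm: "MJ \<le> m" using MJJ Jm by auto
  have G1: "\<forall>j. 1 \<le> j \<and> j < n \<longrightarrow> idx' j < idx' (Suc j)" using G unfolding good_def by blast
  have G2: "\<forall>j\<in>{1..n}. idx' j \<in> J" using G unfolding good_def by blast
  have G3: "\<forall>j<n. u' j < u' (Suc j)" using G unfolding good_def by blast
  have G4: "s (mJ - 1) \<le> u' 0" using G unfolding good_def mJ_def by blast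
  have G5: "u' n \<le> s MJ" using G unfolding good_def MJ_def by blast
  have G6: "\<forall>j\<in>{1..n}. u' (j-1) \<le> s (idx' j - 1) \<and> s (idx' j) \<le> u' j
        \<and> path_image (a (idx' j)) \<inter> subarc g (u' 0) (u' n) \<subseteq> subarc g (u' 0) (u' j)"
    using G unfolding good_def by blast
  have G3': "\<forall>j. 0 \<le> j \<and> j < n \<longrightarrow> u' j < u' (Suc j)" using G3 by simp
  have u'mono: "\<And>i j. i \<le> j \<Longrightarrow> j \<le> n \<Longrightarrow> u' i \<le> u' j"
    using succ_le[OF G3'] by blast
  have si1: "s i1 \<le> s (mJ - 1)" using smono_le[OF sm, of i1 "mJ - 1"] i1mJ MJm mM by simp
  have si0: "s (i1 - 1) < s i1" using smono_lt[OF sm, of "i1 - 1" i1] i1m by simp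
  have s0i: "0 \<le> s (i1 - 1)" using sr i1m by simp
  have sMJ1: "s MJ \<le> 1" using sr MJm by simp
  have Noint: "\<And>\<tau>. \<tau> \<in> P \<Longrightarrow> s (mJ - 1) < \<tau> \<Longrightarrow> \<tau> \<le> s MJ \<Longrightarrow> False"
  proof -
    fix \<tau> assume tP: "\<tau> \<in> P" and l: "s (mJ - 1) < \<tau>" and r: "\<tau> \<le> s MJ"
    have "MJ \<in> Alive" using MJJ JA by auto
    then have "\<tau> \<le> s (MJ - 1)" using tP l r unfolding Alive_def by force
    have k: "kf mJ = kf MJ" using mJJ MJJ unfolding J_def C_def by simp
    have le: "s (mJ - 1) \<le> s (MJ - 1)" using smono_le[OF sm, of "mJ - 1" "MJ - 1"] mM MJm by simp
    have sub: "{p\<in>P. p \<le> s (mJ-1)} \<subset> {p\<in>P. p \<le> s (MJ-1)}"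
      using le tP l \<open>\<tau> \<le> s (MJ - 1)\<close> by force
    have "kf mJ < kf MJ" unfolding kf_def
      by (rule psubset_card_mono) (use finP sub in auto)
    then show False using k by simp
  qed
  define idx where "idx j = (if j = 1 then i1 else idx' (j - 1))" for j
  define u where "u j = (if j = 0 then s (i1 - 1) else u' (j - 1))" for j
  have "good g s a (Suc n) I idx u"
    unfolding good_def
  proof (intro conjI)
    show "\<forall>j. 1 \<le> j \<and> j < Suc n \<longrightarrow> idx j < idx (Suc j)"
    proof (intro allI impI)
      fix j assume j: "1 \<le> j \<and> j < Suc n"
      show "idx j < idx (Suc j)"
      proof (cases "j = 1")
        case True
        then have "idx' 1 \<in> J" using G2 j by auto
        then show ?thesis using True I'gt JI' unfolding idx_def by auto
      next
        case False
        then have "1 \<le> j - 1 \<and> j - 1 < n" using j by auto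
        then have "idx' (j - 1) < idx' (Suc (j - 1))" using G1 by blast
        then show ?thesis using False j unfolding idx_def by simp
      qed
    qed
    show "\<forall>j\<in>{1..Suc n}. idx j \<in> I"
    proof
      fix j assume j: "j \<in> {1..Suc n}"
      show "idx j \<in> I"
      proof (cases "j = 1")
        case True then show ?thesis using i1I unfolding idx_def by simp
      next
        case False
        then have "j - 1 \<in> {1..n}" using j by auto
        then have "idx' (j - 1) \<in> J" using G2 by blast
        then show ?thesis using False JI' unfolding idx_def I'_def by auto
      qed
    qed
    show "\<forall>j<Suc n. u j < u (Suc j)"
    proof (intro allI impI)
      fix j assume j: "j < Suc n"
      show "u j < u (Suc j)"
      proof (cases "j = 0")
        case True then show ?thesis unfolding u_def using si0 si1 G4 by simp
      next
        case False
        then have "j - 1 < n" using j by auto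
        then have "u' (j - 1) < u' (Suc (j - 1))" using G3 by blast
        then show ?thesis using False unfolding u_def by simp
      qed
    qed
    show "s (Min I - 1) \<le> u 0" unfolding u_def i1_def by simp
    show "u (Suc n) \<le> s (Max I)" unfolding u_def
      using G5 smono_le[OF sm MJI] Suc.prems(1) fI by (simp add: subset_eq)
    show "\<forall>j\<in>{1..Suc n}. u (j - 1) \<le> s (idx j - 1) \<and> s (idx j) \<le> u j \<and>
        path_image (a (idx j)) \<inter> subarc g (u 0) (u (Suc n)) \<subseteq> subarc g (u 0) (u j)"
    proof
      fix j assume j: "j \<in> {1..Suc n}"
      show "u (j - 1) \<le> s (idx j - 1) \<and> s (idx j) \<le> u j \<and>
        path_image (a (idx j)) \<inter> subarc g (u 0) (u (Suc n)) \<subseteq> subarc g (u 0) (u j)"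
      proof (cases "j = 1")
        case True
        have "path_image (a i1) \<inter> subarc g (s (i1 - 1)) (u' n) \<subseteq> subarc g (s (i1 - 1)) (u' 0)"
        proof
          fix x assume x: "x \<in> path_image (a i1) \<inter> subarc g (s (i1 - 1)) (u' n)"
          then obtain \<tau> where tau: "x = g \<tau>" "s (i1 - 1) \<le> \<tau>" "\<tau> \<le> u' n" unfolding subarc_def by auto
          show "x \<in> subarc g (s (i1 - 1)) (u' 0)"
          proof (cases "\<tau> \<le> u' 0")
            case True then show ?thesis using tau unfolding subarc_def by auto
          next
            case False
            then have "\<tau> \<in> P" unfolding P_def using tau x si1 G4 G5 sMJ1 s0i by auto
            moreover have "s (mJ - 1) < \<tau>" using False G4 by linarith
            moreover have "\<tau> \<le> s MJ" using tau(3) G5 by linarith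
            ultimately have False using Noint by blast
            then show ?thesis by simp
          qed
        qed
        then show ?thesis using True G4 si1 unfolding u_def idx_def by simp
      next
        case False
        define j' where "j' = j - 1"
        have j': "j = Suc j'" "j' \<in> {1..n}" using j False unfolding j'_def by auto
        have g6: "u' (j'-1) \<le> s (idx' j' - 1)" "s (idx' j') \<le> u' j'"
           "path_image (a (idx' j')) \<inter> subarc g (u' 0) (u' n) \<subseteq> subarc g (u' 0) (u' j')"
          using G6 j'(2) by auto
        have "path_image (a (idx' j')) \<inter> subarc g (s (i1 - 1)) (u' n) \<subseteq> subarc g (s (i1 - 1)) (u' j')"
        proof
          fix x assume x: "x \<in> path_image (a (idx' j')) \<inter> subarc g (s (i1 - 1)) (u' n)"
          then obtain \<tau> where tau: "x = g \<tau>" "s (i1 - 1) \<le> \<tau>" "\<tau> \<le> u' n" unfolding subarc_def by auto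
          show "x \<in> subarc g (s (i1 - 1)) (u' j')"
          proof (cases "\<tau> \<le> u' 0")
            case True
            have "u' 0 \<le> u' j'" using u'mono j'(2) by auto
            then show ?thesis using tau True unfolding subarc_def by auto
          next
            case False
            then have "x \<in> subarc g (u' 0) (u' n)" using tau unfolding subarc_def by auto
            then have "x \<in> subarc g (u' 0) (u' j')" using g6(3) x by auto
            moreover have "s (i1 - 1) \<le> u' 0" using si0 si1 G4 by simp
            ultimately show ?thesis using subarc_mono[of "s (i1 - 1)" "u' 0" "u' j'" "u' j'" g] by auto
          qed
        qed
        then show ?thesis using j' g6 unfolding u_def idx_def by simp
      qed
    qed
  qed
  then show ?case by blast
qed

theorem mainTheorem5:
  fixes g :: "real \<Rightarrow> complex" and s :: "nat \<Rightarrow> real" and m t :: nat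
    and a :: "nat \<Rightarrow> real \<Rightarrow> complex" and v :: complex
  assumes "t \<ge> 1" and "m \<ge> 1"
    and "arc g"
    and "strict_mono_on {0..m} s" and "s 0 = 0" and "s m = 1"
    and "v \<notin> path_image g"
    and "\<And>i. i \<in> {1..m} \<Longrightarrow> arc (a i)"
    and "\<And>i. i \<in> {1..m} \<Longrightarrow> pathstart (a i) = v"
    and "\<And>i. i \<in> {1..m} \<Longrightarrow> pathfinish (a i) \<in> subarc g (s (i - 1)) (s i)"
    and "\<And>i. i \<in> {1..m} \<Longrightarrow>
           finite (path_image (a i) \<inter> path_image g) \<and> card (path_image (a i) \<inter> path_image g) \<le> t"
  shows "\<exists>idx :: nat \<Rightarrow> nat. \<exists>u :: nat \<Rightarrow> real.
     let r = nat \<lfloor>log (real t + 1) (real m)\<rfloor> in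
       strict_mono_on {1..r} idx \<and> idx ` {1..r} \<subseteq> {1..m}
     \<and> strict_mono_on {0..r} u \<and> 0 \<le> u 0 \<and> u r \<le> 1
     \<and> v \<notin> subarc g (u 0) (u r)
     \<and> (\<forall>j \<in> {1..r}. pathstart (a (idx j)) = v
            \<and> pathfinish (a (idx j)) \<in> subarc g (u (j - 1)) (u j)
            \<and> subarc g (s (idx j - 1)) (s (idx j)) \<subseteq> subarc g (u (j - 1)) (u j)
            \<and> path_image (a (idx j)) \<inter> subarc g (u 0) (u r)
                \<subseteq> (\<Union>k \<in> {1..j}. subarc g (u (k - 1)) (u k)))"
proof -
  define r where "r = nat \<lfloor>log (real t + 1) (real m)\<rfloor>"
  have "(t+1)^r \<le> card {1..m}" using pow_le[OF assms(1,2)] unfolding r_def by simp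
  then obtain idx u where G: "good g s a r {1..m} idx u"
    using main_ind[OF assms(1,3,4,5,6,10,11), of "{1..m}" r] by blast
  have mm: "Min {1..m} = 1" "Max {1..m} = m" using assms(2) by (intro Min_eqI Max_eqI; auto)+
  have G1: "\<forall>j. 1 \<le> j \<and> j < r \<longrightarrow> idx j < idx (Suc j)" using G unfolding good_def by blast
  have G2: "\<forall>j\<in>{1..r}. idx j \<in> {1..m}" using G unfolding good_def by blast
  have G3: "\<forall>j<r. u j < u (Suc j)" using G unfolding good_def by blast
  have G4: "0 \<le> u 0" using G assms(5) unfolding good_def mm by simp
  have G5: "u r \<le> 1" using G assms(6) unfolding good_def mm by simp
  have G6: "\<forall>j\<in>{1..r}. u (j-1) \<le> s (idx j - 1) \<and> s (idx j) \<le> u j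
        \<and> path_image (a (idx j)) \<inter> subarc g (u 0) (u r) \<subseteq> subarc g (u 0) (u j)"
    using G unfolding good_def by blast
  have G3': "\<forall>j. 0 \<le> j \<and> j < r \<longrightarrow> u j < u (Suc j)" using G3 by simp
  have sm1: "strict_mono_on {1..r} idx"
    unfolding strict_mono_on_def using succ_lt[OF G1] by auto
  have sm2: "strict_mono_on {0..r} u"
    unfolding strict_mono_on_def using succ_lt[OF G3'] by auto
  have vn: "v \<notin> subarc g (u 0) (u r)"
  proof
    assume "v \<in> subarc g (u 0) (u r)"
    then have "v \<in> path_image g" using G4 G5 unfolding subarc_def path_image_def by auto
    then show False using assms(7) by simp
  qed
  have J: "\<forall>j \<in> {1..r}. pathstart (a (idx j)) = v
            \<and> pathfinish (a (idx j)) \<in> subarc g (u (j - 1)) (u j)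
            \<and> subarc g (s (idx j - 1)) (s (idx j)) \<subseteq> subarc g (u (j - 1)) (u j)
            \<and> path_image (a (idx j)) \<inter> subarc g (u 0) (u r)
                \<subseteq> (\<Union>k \<in> {1..j}. subarc g (u (k - 1)) (u k))"
  proof
    fix j assume j: "j \<in> {1..r}"
    have im: "idx j \<in> {1..m}" using G2 j by auto
    have sub: "subarc g (s (idx j - 1)) (s (idx j)) \<subseteq> subarc g (u (j - 1)) (u j)"
      using G6 j by (intro subarc_mono) auto
    have un: "path_image (a (idx j)) \<inter> subarc g (u 0) (u r)
                \<subseteq> (\<Union>k \<in> {1..j}. subarc g (u (k - 1)) (u k))"
    proof -
      have "path_image (a (idx j)) \<inter> subarc g (u 0) (u r) \<subseteq> subarc g (u 0) (u j)"
        using G6 j by blast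
      also have "\<dots> \<subseteq> (\<Union>k \<in> {1..j}. subarc g (u (k - 1)) (u k))"
        using subarc_union[OF G3, of j g] j by auto
      finally show ?thesis .
    qed
    show "pathstart (a (idx j)) = v
            \<and> pathfinish (a (idx j)) \<in> subarc g (u (j - 1)) (u j)
            \<and> subarc g (s (idx j - 1)) (s (idx j)) \<subseteq> subarc g (u (j - 1)) (u j)
            \<and> path_image (a (idx j)) \<inter> subarc g (u 0) (u r)
                \<subseteq> (\<Union>k \<in> {1..j}. subarc g (u (k - 1)) (u k))"
      using assms(9)[OF im] assms(10)[OF im] sub un by auto
  qed
  show ?thesis unfolding Let_def r_def[symmetric]
    using sm1 G2 sm2 G4 G5 vn J by blast
qed

end
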